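(* Let $n\ge1$ and let $\boldsymbol{\xi}=(\xi_1,\dots,\xi_n)\in\mathbb{R}^n$ be an exchangeable random vector with $\mathbb{E}[\|\boldsymbol{\xi}\|_2^2]<\infty$, where $\|\boldsymbol{\xi}\|_2^2=\sum_i\xi_i^2$. Let $S_k=\xi_1+\dots+\xi_k$. Then for all $1\le k\le n$, $$\mathrm{Var}(S_k)\le\frac{k}{n}\,\mathbb{E}\big[\|\boldsymbol{\xi}\|_2^2\big]+\frac{k^2}{n^2}\,\mathrm{Var}(S_n).$$
   Context: Exchangeable means the law of $(\xi_{\sigma(1)},\dots,\xi_{\sigma(n)})$ equals that of $(\xi_1,\dots,\xi_n)$ for every permutation $\sigma$. *)

theory Defs
  imports "HOL-Probability.Probability" "HOL-Combinatorics.Permutations"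
begin

definition random_vec :: "nat \<Rightarrow> (nat \<Rightarrow> 'a \<Rightarrow> real) \<Rightarrow> 'a \<Rightarrow> (nat \<Rightarrow> real)" where
  "random_vec n \<xi> = (\<lambda>\<omega>. \<lambda>i\<in>{1..n}. \<xi> i \<omega>)"

definition exchangeable :: "'a measure \<Rightarrow> nat \<Rightarrow> (nat \<Rightarrow> 'a \<Rightarrow> real) \<Rightarrow> bool" where
  "exchangeable M n \<xi> \<longleftrightarrow>
     (\<forall>\<sigma>. \<sigma> permutes {1..n} \<longrightarrow>
        distr M (PiM {1..n} (\<lambda>_. borel)) (random_vec n (\<lambda>i. \<xi> (\<sigma> i)))
        = distr M (PiM {1..n} (\<lambda>_. borel)) (random_vec n \<xi>))"

end

theory Submission
  imports Defs
begin

lemma l1: "\<bar>(x::real) * y\<bar> \<le> x\<^sup>2 + y\<^sup>2"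
proof -
  have "0 \<le> (\<bar>x\<bar> - \<bar>y\<bar>)\<^sup>2" by simp
  then have h: "2 * (\<bar>x\<bar> * \<bar>y\<bar>) \<le> x\<^sup>2 + y\<^sup>2" by (simp add: power2_diff algebra_simps)
  have h2: "0 \<le> \<bar>x\<bar> * \<bar>y\<bar>" by simp
  have h3: "\<bar>x * y\<bar> = \<bar>x\<bar> * \<bar>y\<bar>" by (rule abs_mult)
  from h h2 h3 show ?thesis by linarith
qed
lemma l2: "\<bar>(x::real)\<bar> \<le> 1 + x\<^sup>2"
  using l1[of x 1] by simp

lemma exch_integral:
  fixes M :: "'a measure" and \<xi> :: "nat \<Rightarrow> 'a \<Rightarrow> real" and f :: "(nat \<Rightarrow> real) \<Rightarrow> real"
  assumes "\<And>i. i \<in> {1..n} \<Longrightarrow> \<xi> i \<in> borel_measurable M"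
    and "exchangeable M n \<xi>"
    and "\<sigma> permutes {1..n}"
    and f: "f \<in> borel_measurable (PiM {1..n} (\<lambda>_. borel))"
  shows "integral\<^sup>L M (\<lambda>\<omega>. f (random_vec n (\<lambda>i. \<xi> (\<sigma> i)) \<omega>)) = integral\<^sup>L M (\<lambda>\<omega>. f (random_vec n \<xi> \<omega>))"
proof -
  have m1: "random_vec n \<xi> \<in> measurable M (PiM {1..n} (\<lambda>_. borel))"
    unfolding random_vec_def by (rule measurable_restrict) (use assms(1) in auto)
  have m2: "random_vec n (\<lambda>i. \<xi> (\<sigma> i)) \<in> measurable M (PiM {1..n} (\<lambda>_. borel))"
    unfolding random_vec_def
    by (rule measurable_restrict) (use assms(1) permutes_in_image[OF assms(3)] in auto)
  have "integral\<^sup>L M (\<lambda>\<omega>. f (random_vec n (\<lambda>i. \<xi> (\<sigma> i)) \<omega>))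
      = integral\<^sup>L (distr M (PiM {1..n} (\<lambda>_. borel)) (random_vec n (\<lambda>i. \<xi> (\<sigma> i)))) f"
    by (rule integral_distr[OF m2 f, symmetric])
  also have "\<dots> = integral\<^sup>L (distr M (PiM {1..n} (\<lambda>_. borel)) (random_vec n \<xi>)) f"
    using assms(2,3) unfolding exchangeable_def by simp
  also have "\<dots> = integral\<^sup>L M (\<lambda>\<omega>. f (random_vec n \<xi> \<omega>))"
    by (rule integral_distr[OF m1 f])
  finally show ?thesis .
qed

lemma exch_one:
  fixes M :: "'a measure" and \<xi> :: "nat \<Rightarrow> 'a \<Rightarrow> real" and g :: "real \<Rightarrow> real"
  assumes "\<And>i. i \<in> {1..n} \<Longrightarrow> \<xi> i \<in> borel_measurable M"
    and "exchangeable M n \<xi>" and i: "i \<in> {1..n}"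
    and g: "g \<in> borel_measurable borel"
  shows "integral\<^sup>L M (\<lambda>\<omega>. g (\<xi> i \<omega>)) = integral\<^sup>L M (\<lambda>\<omega>. g (\<xi> 1 \<omega>))"
proof -
  let ?\<sigma> = "Transposition.transpose 1 i"
  have p: "?\<sigma> permutes {1..n}" using i by (intro permutes_swap_id) auto
  have 1: "(1::nat) \<in> {1..n}" using i by auto
  have f: "(\<lambda>x. g (x 1)) \<in> borel_measurable (PiM {1..n} (\<lambda>_. borel))"
    using 1 g by measurable
  from exch_integral[OF assms(1,2) p f] 1 show ?thesis
    by (simp add: random_vec_def)
qed

lemma exch_two:
  fixes M :: "'a measure" and \<xi> :: "nat \<Rightarrow> 'a \<Rightarrow> real"
  assumes "\<And>i. i \<in> {1..n} \<Longrightarrow> \<xi> i \<in> borel_measurable M"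
    and "exchangeable M n \<xi>" and i: "i \<in> {1..n}" and j: "j \<in> {1..n}" and ij: "i \<noteq> j"
  shows "integral\<^sup>L M (\<lambda>\<omega>. \<xi> i \<omega> * \<xi> j \<omega>) = integral\<^sup>L M (\<lambda>\<omega>. \<xi> 1 \<omega> * \<xi> 2 \<omega>)"
proof -
  define j' where "j' = Transposition.transpose 1 i j"
  have j'1: "j' \<noteq> 1" using ij unfolding j'_def by (auto simp: Transposition.transpose_def)
  have j'in: "j' \<in> {1..n}" using i j unfolding j'_def by (auto simp: Transposition.transpose_def)
  have n2: "2 \<le> n" using i j ij by auto
  let ?\<sigma> = "Transposition.transpose 1 i \<circ> Transposition.transpose 2 j'"
  have p: "?\<sigma> permutes {1..n}" using i j'in n2
    by (intro permutes_compose permutes_swap_id) auto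
  have s1: "?\<sigma> 1 = i" using j'1 by (auto simp: Transposition.transpose_def)
  have s2: "?\<sigma> 2 = j" unfolding j'_def by (auto simp: Transposition.transpose_def)
  have 1: "(1::nat) \<in> {1..n}" "(2::nat) \<in> {1..n}" using n2 by auto
  have f: "(\<lambda>x. x 1 * x 2) \<in> borel_measurable (PiM {1..n} (\<lambda>_. borel::real measure))"
    using 1 by measurable
  from exch_integral[OF assms(1,2) p f] 1 s1 s2 show ?thesis
    by (simp add: random_vec_def)
qed

theorem proposition6p5:
  fixes M :: "'a measure" and \<xi> :: "nat \<Rightarrow> 'a \<Rightarrow> real" and n k :: nat
  assumes "prob_space M"
    and "n \<ge> 1"
    and "\<And>i. i \<in> {1..n} \<Longrightarrow> \<xi> i \<in> borel_measurable M"
    and "exchangeable M n \<xi>"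
    and "integrable M (\<lambda>\<omega>. \<Sum>i=1..n. (\<xi> i \<omega>)\<^sup>2)"
    and "1 \<le> k" and "k \<le> n"
  shows "prob_space.variance M (\<lambda>\<omega>. \<Sum>i=1..k. \<xi> i \<omega>)
     \<le> real k / real n * prob_space.expectation M (\<lambda>\<omega>. \<Sum>i=1..n. (\<xi> i \<omega>)\<^sup>2)
       + (real k)\<^sup>2 / (real n)\<^sup>2 * prob_space.variance M (\<lambda>\<omega>. \<Sum>i=1..n. \<xi> i \<omega>)"
proof -
  interpret prob_space M by fact
  note meas = assms(3)
  have intsq: "integrable M (\<lambda>\<omega>. (\<xi> i \<omega>)\<^sup>2)" if i: "i \<in> {1..n}" for i
  proof (rule Bochner_Integration.integrable_bound[OF assms(5)])
    show "(\<lambda>\<omega>. (\<xi> i \<omega>)\<^sup>2) \<in> borel_measurable M" using meas[OF i] by measurable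
    show "AE x in M. norm ((\<xi> i x)\<^sup>2) \<le> norm (\<Sum>i = 1..n. (\<xi> i x)\<^sup>2)"
    proof (rule AE_I2)
      fix x
      have "(\<xi> i x)\<^sup>2 \<le> (\<Sum>i = 1..n. (\<xi> i x)\<^sup>2)"
        by (rule member_le_sum) (use i in auto)
      moreover have "0 \<le> (\<Sum>i = 1..n. (\<xi> i x)\<^sup>2)" by (rule sum_nonneg) auto
      ultimately show "norm ((\<xi> i x)\<^sup>2) \<le> norm (\<Sum>i = 1..n. (\<xi> i x)\<^sup>2)" by simp
    qed
  qed
  have intprod: "integrable M (\<lambda>\<omega>. \<xi> i \<omega> * \<xi> j \<omega>)" if i: "i \<in> {1..n}" and j: "j \<in> {1..n}" for i j
  proof (rule Bochner_Integration.integrable_bound[OF Bochner_Integration.integrable_add[OF intsq[OF i] intsq[OF j]]])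
    show "(\<lambda>\<omega>. \<xi> i \<omega> * \<xi> j \<omega>) \<in> borel_measurable M" using meas[OF i] meas[OF j] by measurable
    show "AE x in M. norm (\<xi> i x * \<xi> j x) \<le> norm ((\<xi> i x)\<^sup>2 + (\<xi> j x)\<^sup>2)"
    proof (rule AE_I2)
      fix x
      have "\<bar>\<xi> i x * \<xi> j x\<bar> \<le> (\<xi> i x)\<^sup>2 + (\<xi> j x)\<^sup>2"
        by (rule l1)
      then show "norm (\<xi> i x * \<xi> j x) \<le> norm ((\<xi> i x)\<^sup>2 + (\<xi> j x)\<^sup>2)" by simp
    qed
  qed
  have int1: "integrable M (\<xi> i)" if i: "i \<in> {1..n}" for i
  proof (rule Bochner_Integration.integrable_bound[OF Bochner_Integration.integrable_add[OF integrable_const[of 1] intsq[OF i]]])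
    show "\<xi> i \<in> borel_measurable M" using meas[OF i] .
    show "AE x in M. norm (\<xi> i x) \<le> norm (1 + (\<xi> i x)\<^sup>2)"
    proof (rule AE_I2)
      fix x
      have "\<bar>\<xi> i x\<bar> \<le> 1 + (\<xi> i x)\<^sup>2"
        by (rule l2)
      then show "norm (\<xi> i x) \<le> norm (1 + (\<xi> i x)\<^sup>2)" by simp
    qed
  qed
  define a where "a = expectation (\<lambda>\<omega>. (\<xi> 1 \<omega>)\<^sup>2)"
  define b where "b = expectation (\<lambda>\<omega>. \<xi> 1 \<omega> * \<xi> 2 \<omega>)"
  define m where "m = expectation (\<lambda>\<omega>. \<xi> 1 \<omega>)"
  have Ea: "expectation (\<lambda>\<omega>. (\<xi> i \<omega>)\<^sup>2) = a" if "i \<in> {1..n}" for i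
    unfolding a_def using exch_one[OF meas assms(4) that, of "\<lambda>x. x\<^sup>2"] by simp
  have Em: "expectation (\<xi> i) = m" if "i \<in> {1..n}" for i
    unfolding m_def using exch_one[OF meas assms(4) that, of "\<lambda>x. x"] by simp
  have Eb: "expectation (\<lambda>\<omega>. \<xi> i \<omega> * \<xi> j \<omega>) = b" if "i \<in> {1..n}" "j \<in> {1..n}" "i \<noteq> j" for i j
    unfolding b_def using exch_two[OF meas assms(4) that] by simp
  have Eij: "expectation (\<lambda>\<omega>. \<xi> i \<omega> * \<xi> j \<omega>) = b + (if i = j then a - b else 0)"
    if "i \<in> {1..n}" "j \<in> {1..n}" for i j
    using Ea[OF that(1)] Eb[OF that] by (auto simp: power2_eq_square)
  have S: "integrable M (\<lambda>\<omega>. \<Sum>i=1..p. \<xi> i \<omega>)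
     \<and> integrable M (\<lambda>\<omega>. (\<Sum>i=1..p. \<xi> i \<omega>)\<^sup>2)
     \<and> expectation (\<lambda>\<omega>. \<Sum>i=1..p. \<xi> i \<omega>) = real p * m
     \<and> expectation (\<lambda>\<omega>. (\<Sum>i=1..p. \<xi> i \<omega>)\<^sup>2) = real p * (real p * b + (a - b))"
    if p: "p \<le> n" for p
  proof -
    have sub: "i \<in> {1..p} \<Longrightarrow> i \<in> {1..n}" for i using p by auto
    have sq: "(\<lambda>\<omega>. (\<Sum>i=1..p. \<xi> i \<omega>)\<^sup>2) = (\<lambda>\<omega>. \<Sum>i=1..p. \<Sum>j=1..p. \<xi> i \<omega> * \<xi> j \<omega>)"
      by (simp add: power2_eq_square sum_product)
    have i1: "integrable M (\<lambda>\<omega>. \<Sum>i=1..p. \<xi> i \<omega>)"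
      by (rule Bochner_Integration.integrable_sum) (use int1 sub in auto)
    have i2: "integrable M (\<lambda>\<omega>. \<Sum>i=1..p. \<Sum>j=1..p. \<xi> i \<omega> * \<xi> j \<omega>)"
      by (intro Bochner_Integration.integrable_sum) (use intprod sub in auto)
    have e1: "expectation (\<lambda>\<omega>. \<Sum>i=1..p. \<xi> i \<omega>) = (\<Sum>i=1..p. expectation (\<xi> i))"
      by (rule Bochner_Integration.integral_sum) (use int1 sub in auto)
    also have "\<dots> = (\<Sum>i=1..p. m)" by (rule sum.cong) (use Em sub in auto)
    finally have e1': "expectation (\<lambda>\<omega>. \<Sum>i=1..p. \<xi> i \<omega>) = real p * m" by simp
    have "expectation (\<lambda>\<omega>. \<Sum>i=1..p. \<Sum>j=1..p. \<xi> i \<omega> * \<xi> j \<omega>)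
        = (\<Sum>i=1..p. expectation (\<lambda>\<omega>. \<Sum>j=1..p. \<xi> i \<omega> * \<xi> j \<omega>))"
      by (rule Bochner_Integration.integral_sum) (use intprod sub in \<open>auto intro!: Bochner_Integration.integrable_sum\<close>)
    also have "\<dots> = (\<Sum>i=1..p. \<Sum>j=1..p. expectation (\<lambda>\<omega>. \<xi> i \<omega> * \<xi> j \<omega>))"
      by (rule sum.cong, simp, rule Bochner_Integration.integral_sum) (use intprod sub in auto)
    also have "\<dots> = (\<Sum>i=1..p. \<Sum>j=1..p. b + (if i = j then a - b else 0))"
      by (intro sum.cong refl) (use Eij sub in auto)
    also have "\<dots> = (\<Sum>i=1..p. real p * b + (a - b))"
      by (rule sum.cong) (auto simp: sum.distrib)
    also have "\<dots> = real p * (real p * b + (a - b))" by simp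
    finally show ?thesis using i1 i2 e1' sq by simp
  qed
  have Ssq: "expectation (\<lambda>\<omega>. \<Sum>i=1..n. (\<xi> i \<omega>)\<^sup>2) = real n * a"
  proof -
    have "expectation (\<lambda>\<omega>. \<Sum>i=1..n. (\<xi> i \<omega>)\<^sup>2) = (\<Sum>i=1..n. expectation (\<lambda>\<omega>. (\<xi> i \<omega>)\<^sup>2))"
      by (rule Bochner_Integration.integral_sum) (use intsq in auto)
    also have "\<dots> = (\<Sum>i=1..n. a)" by (rule sum.cong) (use Ea in auto)
    finally show ?thesis by simp
  qed
  have Vk: "variance (\<lambda>\<omega>. \<Sum>i=1..k. \<xi> i \<omega>) = real k * (real k * b + (a - b)) - (real k * m)\<^sup>2"
    proof -
    note SS = S[OF assms(7)]
    have "variance (\<lambda>\<omega>. \<Sum>i=1..k. \<xi> i \<omega>) = expectation (\<lambda>\<omega>. (\<Sum>i=1..k. \<xi> i \<omega>)\<^sup>2) - (expectation (\<lambda>\<omega>. \<Sum>i=1..k. \<xi> i \<omega>))\<^sup>2"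
      by (rule variance_eq) (use SS in auto)
    then show ?thesis using SS by simp
  qed
  have Vn: "variance (\<lambda>\<omega>. \<Sum>i=1..n. \<xi> i \<omega>) = real n * (real n * b + (a - b)) - (real n * m)\<^sup>2"
    proof -
    note SS = S[of n]
    have "variance (\<lambda>\<omega>. \<Sum>i=1..n. \<xi> i \<omega>) = expectation (\<lambda>\<omega>. (\<Sum>i=1..n. \<xi> i \<omega>)\<^sup>2) - (expectation (\<lambda>\<omega>. \<Sum>i=1..n. \<xi> i \<omega>))\<^sup>2"
      by (rule variance_eq) (use SS in auto)
    then show ?thesis using SS by simp
  qed
  have Sn0: "0 \<le> real n * (real n * b + (a - b))"
  proof -
    have "0 \<le> expectation (\<lambda>\<omega>. (\<Sum>i=1..n. \<xi> i \<omega>)\<^sup>2)" by (rule integral_nonneg_AE) auto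
    moreover have "expectation (\<lambda>\<omega>. (\<Sum>i=1..n. \<xi> i \<omega>)\<^sup>2) = real n * (real n * b + (a - b))"
      using S[of n] by simp
    ultimately show ?thesis by linarith
  qed
  have nb: "0 \<le> real n * b + (a - b)"
    using Sn0 assms(2) by (simp add: zero_le_mult_iff)
  have key: "0 \<le> real n * b + real k * (a - b)"
  proof (cases "k = 1")
    case True then show ?thesis using nb by simp
  next
    case False
    then have n2: "2 \<le> n" "k \<ge> 2" using assms(6,7) by auto
    have i12: "1 \<in> {1..n}" "2 \<in> {1..n}" using n2 by auto
    have "0 \<le> expectation (\<lambda>\<omega>. (\<xi> 1 \<omega> - \<xi> 2 \<omega>)\<^sup>2)" by (rule integral_nonneg_AE) auto
    also have "expectation (\<lambda>\<omega>. (\<xi> 1 \<omega> - \<xi> 2 \<omega>)\<^sup>2)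
       = expectation (\<lambda>\<omega>. ((\<xi> 1 \<omega>)\<^sup>2 + (\<xi> 2 \<omega>)\<^sup>2) - 2 * (\<xi> 1 \<omega> * \<xi> 2 \<omega>))"
      by (simp add: power2_diff algebra_simps)
    also have "\<dots> = (expectation (\<lambda>\<omega>. (\<xi> 1 \<omega>)\<^sup>2) + expectation (\<lambda>\<omega>. (\<xi> 2 \<omega>)\<^sup>2))
        - 2 * expectation (\<lambda>\<omega>. \<xi> 1 \<omega> * \<xi> 2 \<omega>)"
      using intsq[OF i12(1)] intsq[OF i12(2)] intprod[OF i12] by simp
    also have "\<dots> = 2 * (a - b)" using Ea[OF i12(1)] Ea[OF i12(2)] Eb[OF i12] by simp
    finally have D: "0 \<le> a - b" by simp
    have "real n * b + real k * (a - b) = (real n * b + (a - b)) + (real k - 1) * (a - b)"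
      by (simp add: algebra_simps)
    also have "0 \<le> \<dots>" using nb D n2 by simp
    finally show ?thesis by simp
  qed
  have n0: "real n > 0" using assms(2) by simp
  have eq: "(real k / real n * (real n * a) + (real k)\<^sup>2 / (real n)\<^sup>2 * (real n * (real n * b + (a - b)) - (real n * m)\<^sup>2))
      - (real k * (real k * b + (a - b)) - (real k * m)\<^sup>2)
      = real k / real n * (real n * b + real k * (a - b))"
    using n0 by (simp add: field_simps power2_eq_square)
  have "0 \<le> real k / real n * (real n * b + real k * (a - b))"
    using key n0 by simp
  then show ?thesis unfolding Vk Vn Ssq using eq by linarith
qed

end
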